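(* Fix $\theta>0$. Let $\xi=\xi(n)$ be a positive real with $\xi\to\infty$ as $n\to\infty$. If $\sigma$ is drawn from the Ewens measure $\mathbb{P}_{\theta,n}$ on $\mathfrak{S}_n$, then $\mathbb{P}_{\theta,n}(\sigma\notin\mathcal{P}_\xi)=O(1/\xi)$.
   Context: For $\theta>0$, the Ewens measure on $\mathfrak{S}_n$ is $\mathbb{P}_{\theta,n}(\sigma=\sigma_0)=\theta^{K(\sigma_0)}/\theta^{(n)}$, where $K(\sigma_0)$ is the number of cycles of $\sigma_0$ and $\theta^{(n)}=\theta(\theta+1)\cdots(\theta+n-1)$. For $\sigma\in\mathfrak{S}_n$ let $c_k(\sigma)$ be the number of cycles of length $k$. $\mathcal{P}_\xi$ is the set of $\sigma\in\mathfrak{S}_n$ such that $c_k(\sigma)\le\xi$ for all $k\le\xi$ and $c_k(\sigma)\le 1$ for all $k>\xi$. *)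

theory Defs
  imports "HOL-Analysis.Analysis" "HOL-Combinatorics.Orbits" "HOL-Library.Landau_Symbols"
begin

definition cycles_of :: "nat \<Rightarrow> (nat \<Rightarrow> nat) \<Rightarrow> nat set set" where
  "cycles_of n \<sigma> = (\<lambda>x. orbit \<sigma> x) ` {1..n}"

definition num_cycles :: "nat \<Rightarrow> (nat \<Rightarrow> nat) \<Rightarrow> nat" where
  "num_cycles n \<sigma> = card (cycles_of n \<sigma>)"

definition cyc_count :: "nat \<Rightarrow> (nat \<Rightarrow> nat) \<Rightarrow> nat \<Rightarrow> nat" where
  "cyc_count n \<sigma> k = card {C \<in> cycles_of n \<sigma>. card C = k}"

definition ewens_prob :: "real \<Rightarrow> nat \<Rightarrow> (nat \<Rightarrow> nat) set \<Rightarrow> real" where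
  "ewens_prob \<theta> n A =
     (\<Sum>\<sigma> \<in> {\<sigma>. \<sigma> permutes {1..n}} \<inter> A. \<theta> ^ num_cycles n \<sigma>) / pochhammer \<theta> n"

definition P_xi :: "nat \<Rightarrow> real \<Rightarrow> (nat \<Rightarrow> nat) set" where
  "P_xi n \<xi> = {\<sigma>. \<sigma> permutes {1..n} \<and>
      (\<forall>k. real k \<le> \<xi> \<longrightarrow> real (cyc_count n \<sigma> k) \<le> \<xi>) \<and>
      (\<forall>k. real k > \<xi> \<longrightarrow> cyc_count n \<sigma> k \<le> 1)}"

end

theory Submission
  imports Defs
begin

definition cyc :: "'a set \<Rightarrow> ('a \<Rightarrow> 'a) \<Rightarrow> 'a set set" where
  "cyc S \<sigma> = (\<lambda>x. orbit \<sigma> x) ` S"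

lemma perm_orbit_same:
  assumes "\<sigma> permutes S" "finite S" "z \<in> orbit \<sigma> y"
  shows "orbit \<sigma> z = orbit \<sigma> y"
  using assms by (meson cyclic_on_orbit orbit_cyclic_eq3)

lemma perm_self_orbit:
  assumes "\<sigma> permutes S" "finite S"
  shows "y \<in> orbit \<sigma> y"
  using assms by (metis permutation_permutes permutation_self_in_orbit)

lemma cyc_sub:
  assumes "\<sigma> permutes S" "C \<in> cyc S \<sigma>" shows "C \<subseteq> S"
  using assms permutes_orbit_subset unfolding cyc_def by fastforce

lemma cyc_finite: "finite S \<Longrightarrow> finite (cyc S \<sigma>)"
  by (simp add: cyc_def)

lemma cyc_transpose_x:
  assumes fS: "finite S" and xS: "x \<notin> S" and q: "q permutes S"
  shows "card (cyc (insert x S) q) = card (cyc S q) + 1"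
proof -
  have "orbit q x = {x}" using q xS by (simp add: orbit_eq_singleton_iff permutes_not_in)
  then have "cyc (insert x S) q = insert {x} (cyc S q)" by (simp add: cyc_def)
  moreover have "{x} \<notin> cyc S q" using cyc_sub[OF q] xS by blast
  ultimately show ?thesis using cyc_finite[OF fS] by simp
qed

lemma cyc_transpose_b:
  assumes fS: "finite S" and xS: "x \<notin> S" and q: "q permutes S" and bS: "b \<in> S"
  shows "card (cyc (insert x S) (Transposition.transpose x b \<circ> q)) = card (cyc S q)"
proof -
  define \<sigma> where "\<sigma> = Transposition.transpose x b \<circ> q"
  obtain c where cS: "c \<in> S" and qc: "q c = b"
    using q bS by (metis permutes_inverses(1) permutes_in_image permutes_inv)
  have qS: "\<And>y. y \<in> S \<Longrightarrow> q y \<in> S" using q by (simp add: permutes_in_image)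
  have qx: "q x = x" using q xS by (simp add: permutes_not_in)
  have \<sigma>c: "\<sigma> c = x" by (simp add: \<sigma>_def qc)
  have \<sigma>x: "\<sigma> x = b" by (simp add: \<sigma>_def qx)
  have \<sigma>o: "\<sigma> s = q s" if "s \<noteq> c" "s \<noteq> x" for s
  proof -
    have "q s \<noteq> b" using that qc q by (metis permutes_inj injD)
    moreover have "q s \<noteq> x" using that qx q by (metis permutes_inj injD)
    ultimately show ?thesis by (simp add: \<sigma>_def transpose_def)
  qed
  have \<sigma>p: "\<sigma> permutes insert x S"
    unfolding \<sigma>_def
    by (rule permutes_compose) (auto intro: permutes_subset[OF q] permutes_swap_id simp: bS)
  have fI: "finite (insert x S)" using fS by simp
  have orbS: "\<And>y. y \<in> S \<Longrightarrow> orbit q y \<subseteq> S" using q permutes_orbit_subset by fast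
  define Ob where "Ob = orbit q c"
  have OS: "Ob \<subseteq> S" using orbS cS Ob_def by auto
  have ox: "orbit \<sigma> x = insert x Ob"
  proof
    show "orbit \<sigma> x \<subseteq> insert x Ob"
    proof
      fix z assume "z \<in> orbit \<sigma> x"
      then show "z \<in> insert x Ob"
      proof induct
        case base then show ?case using \<sigma>x qc Ob_def orbit.base[of q c] by simp
      next
        case (step y)
        show ?case
        proof (cases "y = x")
          case True
          then show ?thesis using \<sigma>x qc Ob_def orbit.base[of q c] by simp
        next
          case yx: False
          show ?thesis
          proof (cases "y = c")
            case True then show ?thesis using \<sigma>c by simp
          next
            case False
            then have "y \<in> Ob" using step(2) yx by simp
            then have "q y \<in> Ob" using Ob_def orbit.step by metis
            then show ?thesis using \<sigma>o[OF False yx] by simp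
          qed
        qed
      qed
    qed
    have "Ob \<subseteq> orbit \<sigma> x"
    proof
      fix z assume "z \<in> Ob"
      then have "z \<in> orbit q c" by (simp add: Ob_def)
      then show "z \<in> orbit \<sigma> x"
      proof induct
        case base then show ?case using \<sigma>x qc by (auto intro: orbit.base)
      next
        case (step y)
        have "y \<in> S" using step(1) orbS cS by auto
        show ?case
        proof (cases "y = c")
          case True then show ?thesis using \<sigma>x qc orbit.base[of \<sigma> x] by simp
        next
          case False
          then have "\<sigma> y = q y" using \<sigma>o \<open>y \<in> S\<close> xS by auto
          then show ?thesis using orbit.step[OF step(2)] by simp
        qed
      qed
    qed
    then show "insert x Ob \<subseteq> orbit \<sigma> x" using perm_self_orbit[OF \<sigma>p fI] by auto
  qed
  define g where "g C = (if c \<in> C then insert x C else C)" for C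
  have o1: "orbit \<sigma> y = g (orbit q y)" if yS: "y \<in> S" for y
  proof (cases "c \<in> orbit q y")
    case True
    then have "orbit q y = Ob" using perm_orbit_same[OF q fS] Ob_def by metis
    moreover have "y \<in> orbit \<sigma> x" using ox calculation perm_self_orbit[OF q fS, of y] by auto
    ultimately show ?thesis using perm_orbit_same[OF \<sigma>p fI] ox True g_def by metis
  next
    case False
    have "orbit \<sigma> y = orbit q y"
    proof (rule orbit_cong)
      show "y \<in> orbit q y" using perm_self_orbit[OF q fS] .
      fix s assume "s \<in> orbit q y"
      moreover have "s \<in> S" using calculation orbS yS by auto
      ultimately show "\<sigma> s = q s" using False xS by (intro \<sigma>o) auto
    qed
    then show ?thesis using False g_def by simp
  qed
  have "cyc (insert x S) \<sigma> = g ` cyc S q"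
  proof -
    have "cyc (insert x S) \<sigma> = insert (orbit \<sigma> x) ((\<lambda>y. orbit \<sigma> y) ` S)" by (simp add: cyc_def)
    also have "orbit \<sigma> x = g (orbit q c)" using ox Ob_def g_def perm_self_orbit[OF q fS, of c] by simp
    also have "(\<lambda>y. orbit \<sigma> y) ` S = g ` cyc S q" using o1 by (auto simp: cyc_def)
    also have "insert (g (orbit q c)) (g ` cyc S q) = g ` cyc S q" using cS by (auto simp: cyc_def)
    finally show ?thesis .
  qed
  moreover have "inj_on g (cyc S q)"
  proof (rule inj_onI)
    fix C D assume "C \<in> cyc S q" "D \<in> cyc S q" "g C = g D"
    then have "C \<subseteq> S" "D \<subseteq> S" using cyc_sub[OF q] by auto
    then have "g C - {x} = C" "g D - {x} = D" using xS g_def by auto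
    then show "C = D" using \<open>g C = g D\<close> by metis
  qed
  ultimately show ?thesis by (simp add: card_image \<sigma>_def)
qed

definition Zs :: "real \<Rightarrow> 'a set \<Rightarrow> real" where
  "Zs \<theta> S = (\<Sum>\<sigma>\<in>{\<sigma>. \<sigma> permutes S}. \<theta> ^ card (cyc S \<sigma>))"

lemma Zs_insert:
  assumes fS: "finite S" and xS: "x \<notin> S"
  shows "Zs \<theta> (insert x S) = (\<theta> + card S) * Zs \<theta> S"
proof -
  have "Zs \<theta> (insert x S) = (\<Sum>b\<in>insert x S. \<Sum>q\<in>{p. p permutes S}.
      \<theta> ^ card (cyc (insert x S) (Transposition.transpose x b \<circ> q)))"
    unfolding Zs_def by (rule sum_over_permutations_insert[OF fS xS])
  also have "\<dots> = (\<Sum>q\<in>{p. p permutes S}. \<theta> ^ (card (cyc S q) + 1))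
      + (\<Sum>b\<in>S. \<Sum>q\<in>{p. p permutes S}. \<theta> ^ card (cyc S q))"
  proof -
    have A1: "(\<Sum>q\<in>{p. p permutes S}. \<theta> ^ card (cyc (insert x S) (Transposition.transpose x x \<circ> q)))
       = (\<Sum>q\<in>{p. p permutes S}. \<theta> ^ (card (cyc S q) + 1))"
      by (rule sum.cong) (auto simp: cyc_transpose_x[OF fS xS])
    have A2: "(\<Sum>b\<in>S. \<Sum>q\<in>{p. p permutes S}. \<theta> ^ card (cyc (insert x S) (Transposition.transpose x b \<circ> q)))
       = (\<Sum>b\<in>S. \<Sum>q\<in>{p. p permutes S}. \<theta> ^ card (cyc S q))"
      by (intro sum.cong refl) (simp add: cyc_transpose_b[OF fS xS])
    show ?thesis by (subst sum.insert[OF fS xS]) (simp only: A1 A2)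
  qed
  also have "\<dots> = (\<theta> + card S) * Zs \<theta> S"
    unfolding Zs_def by (simp add: sum_distrib_left distrib_right sum.distrib)
  finally show ?thesis .
qed

lemma Zs_poch:
  assumes "finite S" shows "Zs \<theta> S = pochhammer \<theta> (card S)"
  using assms
proof (induction rule: finite_induct)
  case empty
  then show ?case by (simp add: Zs_def cyc_def)
next
  case (insert x F)
  then show ?case by (simp add: Zs_insert pochhammer_Suc algebra_simps)
qed

definition ncyc :: "'a set \<Rightarrow> nat" where
  "ncyc A = card {\<tau>. \<tau> permutes A \<and> card (cyc A \<tau>) = 1}"

lemma card_filter_sum:
  assumes "finite A"
  shows "card {x \<in> A. P x} = (\<Sum>x\<in>A. if P x then 1 else 0 :: nat)"
  using assms by (simp add: sum.inter_filter[symmetric])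

lemma ncyc_insert:
  assumes fA: "finite A" and ne: "A \<noteq> {}" and xA: "x \<notin> A"
  shows "ncyc (insert x A) = card A * ncyc A"
proof -
  have fP: "finite {p. p permutes A}" using fA finite_permutations by blast
  have fPI: "finite {p. p permutes insert x A}" using fA finite_permutations by blast
  have ne': "\<And>q. card (cyc A q) \<noteq> 0" using ne fA by (simp add: cyc_def)
  have "ncyc (insert x A) = (\<Sum>\<tau>\<in>{p. p permutes insert x A}. if card (cyc (insert x A) \<tau>) = 1 then 1 else 0 :: nat)"
    unfolding ncyc_def using card_filter_sum[OF fPI, of "\<lambda>\<tau>. card (cyc (insert x A) \<tau>) = 1"]
    by simp
  also have "\<dots> = (\<Sum>b\<in>insert x A. \<Sum>q\<in>{p. p permutes A}.
      if card (cyc (insert x A) (Transposition.transpose x b \<circ> q)) = 1 then 1 else 0)"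
    by (rule sum_over_permutations_insert[OF fA xA])
  also have "\<dots> = (\<Sum>b\<in>A. \<Sum>q\<in>{p. p permutes A}. if card (cyc A q) = 1 then 1 else 0)"
  proof -
    have A1: "(\<Sum>q\<in>{p. p permutes A}. if card (cyc (insert x A) (Transposition.transpose x x \<circ> q)) = 1 then 1 else 0)
       = (0::nat)"
      by (rule sum.neutral) (auto simp: cyc_transpose_x[OF fA xA] ne')
    have A2: "(\<Sum>b\<in>A. \<Sum>q\<in>{p. p permutes A}. if card (cyc (insert x A) (Transposition.transpose x b \<circ> q)) = 1 then 1 else 0)
       = (\<Sum>b\<in>A. \<Sum>q\<in>{p. p permutes A}. if card (cyc A q) = 1 then 1 else (0::nat))"
      by (intro sum.cong refl) (simp add: cyc_transpose_b[OF fA xA])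
    have "(\<Sum>b\<in>insert x A. \<Sum>q\<in>{p. p permutes A}. if card (cyc (insert x A) (Transposition.transpose x b \<circ> q)) = 1 then 1 else (0::nat))
      = (\<Sum>q\<in>{p. p permutes A}. if card (cyc (insert x A) (Transposition.transpose x x \<circ> q)) = 1 then 1 else 0)
       + (\<Sum>b\<in>A. \<Sum>q\<in>{p. p permutes A}. if card (cyc (insert x A) (Transposition.transpose x b \<circ> q)) = 1 then 1 else 0)"
      by (rule sum.insert[OF fA xA])
    then show ?thesis using A1 A2 by linarith
  qed
  also have "\<dots> = card A * ncyc A"
    unfolding ncyc_def using card_filter_sum[OF fP, of "\<lambda>\<tau>. card (cyc A \<tau>) = 1"] by simp
  finally show ?thesis .
qed

lemma ncyc_fact:
  assumes "finite A" "A \<noteq> {}" shows "ncyc A = fact (card A - 1)"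
  using assms
proof (induction rule: finite_ne_induct)
  case (singleton a)
  have "{\<tau>. \<tau> permutes {a} \<and> card (cyc {a} \<tau>) = 1} = {id}"
    by (auto simp: cyc_def orbit_eq_singleton_iff[THEN iffD2])
  then show ?case by (simp add: ncyc_def)
next
  case (insert x F)
  then show ?case
  proof -
    obtain m where m: "card F = Suc m" using insert(1,2) by (metis card_gt_0_iff gr0_implies_Suc)
    have "ncyc (insert x F) = card F * ncyc F" using insert(1,2,3) by (rule ncyc_insert)
    also have "\<dots> = fact (card F)" using insert(4) m by simp
    finally show ?thesis using insert(1,3) by simp
  qed
qed

lemma restrict_facts:
  assumes \<sigma>: "\<sigma> permutes S" and fS: "finite S" and AC: "A \<in> cyc S \<sigma>"
  shows "perm_restrict \<sigma> A permutes A"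
    and "card (cyc A (perm_restrict \<sigma> A)) = 1"
    and "perm_restrict \<sigma> (S - A) permutes (S - A)"
    and "\<And>y. y \<in> S - A \<Longrightarrow> orbit (perm_restrict \<sigma> (S - A)) y = orbit \<sigma> y"
    and "card (cyc S \<sigma>) = Suc (card (cyc (S - A) (perm_restrict \<sigma> (S - A))))"
    and "A \<subseteq> S" "A \<noteq> {}"
proof -
  obtain a where aS: "a \<in> S" and Aa: "A = orbit \<sigma> a" using AC by (auto simp: cyc_def)
  have cycA: "cyclic_on \<sigma> A" using Aa cyclic_on_orbit[OF \<sigma> fS] by simp
  have oA: "\<And>y. y \<in> A \<Longrightarrow> orbit \<sigma> y = A" using cycA orbit_cyclic_eq3 by metis
  have \<sigma>A: "\<And>y. y \<in> A \<Longrightarrow> \<sigma> y \<in> A" using cycA cyclic_on_inI by metis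
  show AS: "A \<subseteq> S" using Aa permutes_orbit_subset[OF \<sigma> aS] by simp
  show Ane: "A \<noteq> {}" using Aa orbit_nonempty by metis
  define \<tau> where "\<tau> = perm_restrict \<sigma> A"
  have inj\<sigma>: "inj \<sigma>" using \<sigma> permutes_inj by blast
  have "\<sigma> ` A = A"
  proof
    show "\<sigma> ` A \<subseteq> A" using \<sigma>A by auto
    show "A \<subseteq> \<sigma> ` A"
    proof
      fix y assume yA: "y \<in> A"
      have "\<sigma> (inv \<sigma> y) = y" using \<sigma> by (meson permutes_inverses(1))
      then have "inv \<sigma> y \<in> A" using cyclic_on_f_in[OF \<sigma> cycA] yA by metis
      then show "y \<in> \<sigma> ` A" using \<open>\<sigma> (inv \<sigma> y) = y\<close> by (metis imageI)
    qed
  qed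
  moreover have "inj_on \<sigma> A" by (meson inj\<sigma> inj_on_subset subset_UNIV)
  ultimately have "bij_betw \<sigma> A A" by (simp add: bij_betw_def)
  then have "bij_betw \<tau> A A" by (rule bij_betw_cong[THEN iffD1, rotated]) (simp add: \<tau>_def perm_restrict_simps)
  then show "perm_restrict \<sigma> A permutes A"
    unfolding \<tau>_def[symmetric] by (rule bij_imp_permutes) (simp add: \<tau>_def perm_restrict_simps)
  have "\<And>y. y \<in> A \<Longrightarrow> orbit \<tau> y = orbit \<sigma> y"
    by (rule orbit_cong0) (auto simp: \<tau>_def perm_restrict_simps \<sigma>A)
  then have "cyc A \<tau> = {A}" using oA Ane by (auto simp: cyc_def)
  then show "card (cyc A (perm_restrict \<sigma> A)) = 1" by (simp add: \<tau>_def)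
  define R where "R = perm_restrict \<sigma> (S - A)"
  show Rp: "perm_restrict \<sigma> (S - A) permutes (S - A)"
    using perm_restrict_diff_cyclic[OF \<sigma> cycA] .
  have oR: "orbit R y = orbit \<sigma> y" if yS: "y \<in> S - A" for y
  proof (rule orbit_cong0[of y "S - A" R \<sigma>])
    show "y \<in> S - A" using yS .
    show "R \<in> S - A \<rightarrow> S - A" using permutes_in_image[OF Rp] by (auto simp: R_def)
    show "\<And>z. z \<in> S - A \<Longrightarrow> R z = \<sigma> z" by (simp add: R_def perm_restrict_simps)
  qed
  then show "\<And>y. y \<in> S - A \<Longrightarrow> orbit (perm_restrict \<sigma> (S - A)) y = orbit \<sigma> y"
    by (simp add: R_def)
  have "cyc S \<sigma> = orbit \<sigma> ` A \<union> orbit \<sigma> ` (S - A)" using AS by (auto simp: cyc_def)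
  also have "orbit \<sigma> ` A = {A}" using oA Ane by auto
  also have "orbit \<sigma> ` (S - A) = cyc (S - A) R" using oR by (auto simp: cyc_def)
  finally have cS: "cyc S \<sigma> = insert A (cyc (S - A) R)" by simp
  have "A \<notin> cyc (S - A) R"
  proof
    assume "A \<in> cyc (S - A) R"
    then obtain y where "y \<in> S - A" "A = orbit R y" by (auto simp: cyc_def)
    then have "A = orbit \<sigma> y" using oR by simp
    then have "y \<in> A" using perm_self_orbit[OF \<sigma> fS, of y] by simp
    then show False using \<open>y \<in> S - A\<close> by simp
  qed
  then show "card (cyc S \<sigma>) = Suc (card (cyc (S - A) (perm_restrict \<sigma> (S - A))))"
    using cS cyc_finite[of "S - A" R] fS by (simp add: R_def)
qed

lemma restrict_le:
  fixes \<theta> :: real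
  assumes fS: "finite S" and th: "\<theta> \<ge> 0"
  shows "(\<Sum>\<sigma>\<in>{\<sigma>. \<sigma> permutes S \<and> A \<in> cyc S \<sigma> \<and> P (perm_restrict \<sigma> (S - A))}. \<theta> ^ card (cyc S \<sigma>))
         \<le> \<theta> * ncyc A * (\<Sum>\<rho>\<in>{\<rho>. \<rho> permutes (S - A) \<and> P \<rho>}. \<theta> ^ card (cyc (S - A) \<rho>))"
proof -
  define X where "X = {\<sigma>. \<sigma> permutes S \<and> A \<in> cyc S \<sigma> \<and> P (perm_restrict \<sigma> (S - A))}"
  define Y1 where "Y1 = {\<tau>. \<tau> permutes A \<and> card (cyc A \<tau>) = 1}"
  define Y2 where "Y2 = {\<rho>. \<rho> permutes (S - A) \<and> P \<rho>}"
  define h where "h \<sigma> = (perm_restrict \<sigma> A, perm_restrict \<sigma> (S - A))" for \<sigma> :: "'a \<Rightarrow> 'a"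
  define G where "G p = \<theta> * \<theta> ^ card (cyc (S - A) (snd p))" for p :: "('a \<Rightarrow> 'a) \<times> ('a \<Rightarrow> 'a)"
  show ?thesis
  proof (cases "X = {}")
    case True
    have "0 \<le> (\<Sum>\<rho>\<in>{\<rho>. \<rho> permutes (S - A) \<and> P \<rho>}. \<theta> ^ card (cyc (S - A) \<rho>))"
      using th by (intro sum_nonneg) simp
    moreover have "(\<Sum>\<sigma>\<in>X. \<theta> ^ card (cyc S \<sigma>)) = 0" using True by simp
    ultimately have "(\<Sum>\<sigma>\<in>X. \<theta> ^ card (cyc S \<sigma>)) \<le> \<theta> * ncyc A * (\<Sum>\<rho>\<in>{\<rho>. \<rho> permutes (S - A) \<and> P \<rho>}. \<theta> ^ card (cyc (S - A) \<rho>))"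
      using th by simp
    then show ?thesis by (simp only: X_def)
  next
    case False
    then obtain \<sigma>0 where "\<sigma>0 \<in> X" by blast
    then have AS: "A \<subseteq> S" using restrict_facts(6)[OF _ fS] by (auto simp: X_def)
    have fA: "finite A" using AS fS finite_subset by blast
    have rec: "\<sigma> = (\<lambda>x. if x \<in> A then fst (h \<sigma>) x else snd (h \<sigma>) x)" if "\<sigma> permutes S" for \<sigma>
    proof
      fix x show "\<sigma> x = (if x \<in> A then fst (h \<sigma>) x else snd (h \<sigma>) x)"
        using that by (cases "x \<in> S") (auto simp: h_def perm_restrict_simps permutes_not_in)
    qed
    have inj: "inj_on h X"
    proof (rule inj_onI)
      fix s1 s2 assume "s1 \<in> X" "s2 \<in> X" "h s1 = h s2"
      then have "s1 permutes S" "s2 permutes S" by (auto simp: X_def)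
      then have "s1 = (\<lambda>x. if x \<in> A then fst (h s1) x else snd (h s1) x)"
                "s2 = (\<lambda>x. if x \<in> A then fst (h s2) x else snd (h s2) x)" using rec by blast+
      then show "s1 = s2" using \<open>h s1 = h s2\<close> by metis
    qed
    have img: "h ` X \<subseteq> Y1 \<times> Y2"
      using restrict_facts[OF _ fS] by (auto simp: X_def Y1_def Y2_def h_def)
    have fY: "finite (Y1 \<times> Y2)"
      using finite_permutations[OF fA] finite_permutations[of "S - A"] fS
      by (auto simp: Y1_def Y2_def)
    have "(\<Sum>\<sigma>\<in>X. \<theta> ^ card (cyc S \<sigma>)) = (\<Sum>\<sigma>\<in>X. G (h \<sigma>))"
      using restrict_facts[OF _ fS] by (intro sum.cong refl) (auto simp: X_def G_def h_def)
    also have "\<dots> = (\<Sum>p\<in>h ` X. G p)" by (simp add: sum.reindex[OF inj])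
    also have "\<dots> \<le> (\<Sum>p\<in>Y1 \<times> Y2. G p)"
      by (rule sum_mono2[OF fY img]) (simp add: G_def th)
    also have "\<dots> = (\<Sum>\<tau>\<in>Y1. \<Sum>\<rho>\<in>Y2. \<theta> * \<theta> ^ card (cyc (S - A) \<rho>))"
    proof -
      have "(\<Sum>\<tau>\<in>Y1. \<Sum>\<rho>\<in>Y2. G (\<tau>, \<rho>)) = (\<Sum>p\<in>Y1 \<times> Y2. G p)"
        by (simp add: sum.cartesian_product)
      then show ?thesis by (simp add: G_def)
    qed
    also have "\<dots> = real (card Y1) * (\<theta> * (\<Sum>\<rho>\<in>Y2. \<theta> ^ card (cyc (S - A) \<rho>)))"
      by (simp add: sum_distrib_left)
    also have "\<dots> = \<theta> * ncyc A * (\<Sum>\<rho>\<in>Y2. \<theta> ^ card (cyc (S - A) \<rho>))"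
      by (simp add: ncyc_def Y1_def)
    finally show ?thesis by (simp add: X_def Y2_def)
  qed
qed

lemma pair_le:
  fixes \<theta> :: real
  assumes fS: "finite S" and th: "\<theta> \<ge> 0" and dis: "A \<inter> B = {}" and Ane: "A \<noteq> {}"
  shows "(\<Sum>\<sigma>\<in>{\<sigma>. \<sigma> permutes S \<and> A \<in> cyc S \<sigma> \<and> B \<in> cyc S \<sigma>}. \<theta> ^ card (cyc S \<sigma>))
     \<le> \<theta> * ncyc A * (\<theta> * ncyc B * pochhammer \<theta> (card (S - A - B)))"
proof -
  define X0 where "X0 = {\<sigma>. \<sigma> permutes S \<and> A \<in> cyc S \<sigma> \<and> B \<in> cyc S \<sigma>}"
  define X1 where "X1 = {\<sigma>. \<sigma> permutes S \<and> A \<in> cyc S \<sigma> \<and> (\<lambda>\<rho>. B \<in> cyc (S - A) \<rho>) (perm_restrict \<sigma> (S - A))}"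
  have sub: "X0 \<subseteq> X1"
  proof
    fix \<sigma> assume "\<sigma> \<in> X0"
    then have \<sigma>: "\<sigma> permutes S" and AC: "A \<in> cyc S \<sigma>" and BC: "B \<in> cyc S \<sigma>" by (auto simp: X0_def)
    obtain a where a: "a \<in> S" "A = orbit \<sigma> a" using AC by (auto simp: cyc_def)
    obtain b where b: "b \<in> S" "B = orbit \<sigma> b" using BC by (auto simp: cyc_def)
    have "b \<notin> A"
    proof
      assume "b \<in> A"
      then have "B = A" using perm_orbit_same[OF \<sigma> fS] a b by metis
      then show False using dis Ane by simp
    qed
    then have "orbit (perm_restrict \<sigma> (S - A)) b = B" using restrict_facts(4)[OF \<sigma> fS AC, of b] b by simp
    then have "B \<in> cyc (S - A) (perm_restrict \<sigma> (S - A))" using b \<open>b \<notin> A\<close> by (auto simp: cyc_def)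
    then show "\<sigma> \<in> X1" using \<sigma> AC by (simp add: X1_def)
  qed
  have fX1: "finite X1" using finite_permutations[OF fS] by (rule finite_subset[rotated]) (auto simp: X1_def)
  have "(\<Sum>\<sigma>\<in>X0. \<theta> ^ card (cyc S \<sigma>)) \<le> (\<Sum>\<sigma>\<in>X1. \<theta> ^ card (cyc S \<sigma>))"
    by (rule sum_mono2[OF fX1 sub]) (simp add: th)
  also have "\<dots> \<le> \<theta> * ncyc A * (\<Sum>\<rho>\<in>{\<rho>. \<rho> permutes (S - A) \<and> B \<in> cyc (S - A) \<rho>}. \<theta> ^ card (cyc (S - A) \<rho>))"
    unfolding X1_def by (rule restrict_le[OF fS th])
  also have "\<dots> \<le> \<theta> * ncyc A * (\<theta> * ncyc B * pochhammer \<theta> (card (S - A - B)))"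
  proof (rule mult_left_mono)
    show "0 \<le> \<theta> * real (ncyc A)" using th by simp
    have fSA: "finite (S - A)" using fS by simp
    have "(\<Sum>\<rho>\<in>{\<rho>. \<rho> permutes (S - A) \<and> B \<in> cyc (S - A) \<rho> \<and> True}. \<theta> ^ card (cyc (S - A) \<rho>))
      \<le> \<theta> * ncyc B * (\<Sum>\<rho>\<in>{\<rho>. \<rho> permutes (S - A - B) \<and> True}. \<theta> ^ card (cyc (S - A - B) \<rho>))"
      by (rule restrict_le[OF fSA th])
    also have "(\<Sum>\<rho>\<in>{\<rho>. \<rho> permutes (S - A - B) \<and> True}. \<theta> ^ card (cyc (S - A - B) \<rho>)) = pochhammer \<theta> (card (S - A - B))"
      using Zs_poch[of "S - A - B" \<theta>] fS by (simp add: Zs_def)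
    finally show "(\<Sum>\<rho>\<in>{\<rho>. \<rho> permutes (S - A) \<and> B \<in> cyc (S - A) \<rho>}. \<theta> ^ card (cyc (S - A) \<rho>))
      \<le> \<theta> * ncyc B * pochhammer \<theta> (card (S - A - B))" by simp
  qed
  finally show ?thesis by (simp add: X0_def)
qed

definition Pk :: "'a set \<Rightarrow> nat \<Rightarrow> ('a set \<times> 'a set) set" where
  "Pk S k = Sigma {A. A \<subseteq> S \<and> card A = k} (\<lambda>A. {B. B \<subseteq> S - A \<and> card B = k})"

lemma card_Pk:
  assumes "finite S" shows "card (Pk S k) = (card S choose k) * ((card S - k) choose k)"
proof -
  have fin1: "finite {A. A \<subseteq> S \<and> card A = k}" using assms by simp
  have "card (Pk S k) = (\<Sum>A\<in>{A. A \<subseteq> S \<and> card A = k}. card {B. B \<subseteq> S - A \<and> card B = k})"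
    unfolding Pk_def using fin1 assms by (subst card_SigmaI) auto
  also have "\<dots> = (\<Sum>A\<in>{A. A \<subseteq> S \<and> card A = k}. (card S - k) choose k)"
  proof (rule sum.cong[OF refl])
    fix A assume "A \<in> {A. A \<subseteq> S \<and> card A = k}"
    then have "card (S - A) = card S - k" using assms by (auto simp: card_Diff_subset finite_subset)
    then show "card {B. B \<subseteq> S - A \<and> card B = k} = (card S - k) choose k"
      using n_subsets[of "S - A" k] assms by simp
  qed
  also have "\<dots> = (card S choose k) * ((card S - k) choose k)"
    using n_subsets[OF assms, of k] by simp
  finally show ?thesis .
qed

lemma cyc_disjoint:
  assumes "\<sigma> permutes S" "finite S" "C \<in> cyc S \<sigma>" "D \<in> cyc S \<sigma>" "C \<noteq> D"
  shows "C \<inter> D = {}"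
proof (rule ccontr)
  assume "C \<inter> D \<noteq> {}"
  then obtain z where z: "z \<in> C" "z \<in> D" by blast
  obtain c d where "C = orbit \<sigma> c" "D = orbit \<sigma> d" using assms(3,4) by (auto simp: cyc_def)
  then show False using perm_orbit_same[OF assms(1,2)] z assms(5) by metis
qed

lemma card_pairs:
  assumes \<sigma>: "\<sigma> permutes S" and fS: "finite S" and k: "k \<ge> 1"
  shows "card {p \<in> Pk S k. fst p \<in> cyc S \<sigma> \<and> snd p \<in> cyc S \<sigma>}
       = card {C \<in> cyc S \<sigma>. card C = k} * (card {C \<in> cyc S \<sigma>. card C = k} - 1)"
proof -
  define X where "X = {C \<in> cyc S \<sigma>. card C = k}"
  have fX: "finite X" using cyc_finite[OF fS] by (simp add: X_def)
  have eq: "{p \<in> Pk S k. fst p \<in> cyc S \<sigma> \<and> snd p \<in> cyc S \<sigma>} = X \<times> X - (\<lambda>a. (a, a)) ` X"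
  proof (intro set_eqI iffI)
    fix p assume "p \<in> {p \<in> Pk S k. fst p \<in> cyc S \<sigma> \<and> snd p \<in> cyc S \<sigma>}"
    then obtain A B where p: "p = (A, B)" "A \<subseteq> S" "card A = k" "B \<subseteq> S - A" "card B = k"
       "A \<in> cyc S \<sigma>" "B \<in> cyc S \<sigma>" by (auto simp: Pk_def)
    have "A \<noteq> {}" using p k by auto
    then have "A \<noteq> B" using p by auto
    then show "p \<in> X \<times> X - (\<lambda>a. (a, a)) ` X" using p by (auto simp: X_def)
  next
    fix p assume "p \<in> X \<times> X - (\<lambda>a. (a, a)) ` X"
    then obtain A B where p: "p = (A, B)" "A \<in> cyc S \<sigma>" "B \<in> cyc S \<sigma>" "card A = k" "card B = k" "A \<noteq> B"
      by (auto simp: X_def)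
    have "A \<subseteq> S" "B \<subseteq> S" using cyc_sub[OF \<sigma>] p by auto
    moreover have "A \<inter> B = {}" using cyc_disjoint[OF \<sigma> fS] p by auto
    ultimately show "p \<in> {p \<in> Pk S k. fst p \<in> cyc S \<sigma> \<and> snd p \<in> cyc S \<sigma>}"
      using p by (auto simp: Pk_def)
  qed
  have "card (X \<times> X - (\<lambda>a. (a, a)) ` X) = card (X \<times> X) - card ((\<lambda>a. (a, a)) ` X)"
    by (rule card_Diff_subset) (use fX in auto)
  also have "card ((\<lambda>a. (a, a)) ` X) = card X" by (rule card_image) (simp add: inj_on_def)
  also have "card (X \<times> X) = card X * card X" by (simp add: card_cartesian_product)
  finally show ?thesis using eq by (simp add: X_def diff_mult_distrib2)
qed

lemma moment2:
  fixes \<theta> :: real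
  assumes fS: "finite S" and th: "\<theta> \<ge> 0" and k: "k \<ge> 1"
  shows "(\<Sum>\<sigma>\<in>{\<sigma>. \<sigma> permutes S}. \<theta> ^ card (cyc S \<sigma>) *
            real (card {C \<in> cyc S \<sigma>. card C = k} * (card {C \<in> cyc S \<sigma>. card C = k} - 1)))
     \<le> real ((card S choose k) * ((card S - k) choose k)) * ((\<theta> * fact (k - 1)) ^ 2 * pochhammer \<theta> (card S - 2 * k))"
proof -
  define PS where "PS = {\<sigma>. \<sigma> permutes S}"
  have fPS: "finite PS" using finite_permutations[OF fS] by (simp add: PS_def)
  have fPk: "finite (Pk S k)"
    unfolding Pk_def using fS by (intro finite_SigmaI) auto
  define R where "R \<sigma> p = (fst p \<in> cyc S \<sigma> \<and> snd p \<in> cyc S \<sigma>)" for \<sigma> p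
  have "(\<Sum>\<sigma>\<in>PS. \<theta> ^ card (cyc S \<sigma>) *
            real (card {C \<in> cyc S \<sigma>. card C = k} * (card {C \<in> cyc S \<sigma>. card C = k} - 1)))
      = (\<Sum>\<sigma>\<in>PS. \<Sum>p\<in>{p. p \<in> Pk S k \<and> R \<sigma> p}. \<theta> ^ card (cyc S \<sigma>))"
  proof (rule sum.cong[OF refl])
    fix \<sigma> assume "\<sigma> \<in> PS"
    then show "\<theta> ^ card (cyc S \<sigma>) *
            real (card {C \<in> cyc S \<sigma>. card C = k} * (card {C \<in> cyc S \<sigma>. card C = k} - 1))
      = (\<Sum>p\<in>{p. p \<in> Pk S k \<and> R \<sigma> p}. \<theta> ^ card (cyc S \<sigma>))"
      using card_pairs[OF _ fS k, of \<sigma>] by (simp add: PS_def R_def mult.commute)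
  qed
  also have "\<dots> = (\<Sum>p\<in>Pk S k. \<Sum>\<sigma>\<in>{\<sigma>. \<sigma> \<in> PS \<and> R \<sigma> p}. \<theta> ^ card (cyc S \<sigma>))"
    by (rule sum.swap_restrict[OF fPS fPk])
  also have "\<dots> \<le> (\<Sum>p\<in>Pk S k. (\<theta> * fact (k - 1)) ^ 2 * pochhammer \<theta> (card S - 2 * k))"
  proof (rule sum_mono)
    fix p assume "p \<in> Pk S k"
    then obtain A B where p: "p = (A, B)" "A \<subseteq> S" "card A = k" "B \<subseteq> S - A" "card B = k"
      by (auto simp: Pk_def)
    have fA: "finite A" "finite B" using p(2,4) fS by (auto intro: finite_subset)
    have Ane: "A \<noteq> {}" "B \<noteq> {}" using p k by auto
    have cd: "card (S - A - B) = card S - 2 * k"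
    proof -
      have "card (S - A - B) = card (S - A) - card B" using p fS by (simp add: card_Diff_subset fA)
      also have "card (S - A) = card S - card A" using p fS by (simp add: card_Diff_subset fA)
      finally show ?thesis using p by simp
    qed
    have "(\<Sum>\<sigma>\<in>{\<sigma>. \<sigma> \<in> PS \<and> R \<sigma> p}. \<theta> ^ card (cyc S \<sigma>))
        = (\<Sum>\<sigma>\<in>{\<sigma>. \<sigma> permutes S \<and> A \<in> cyc S \<sigma> \<and> B \<in> cyc S \<sigma>}. \<theta> ^ card (cyc S \<sigma>))"
      by (simp add: PS_def R_def p)
    also have "\<dots> \<le> \<theta> * ncyc A * (\<theta> * ncyc B * pochhammer \<theta> (card (S - A - B)))"
      by (rule pair_le[OF fS th _ Ane(1)]) (use p in auto)
    also have "\<dots> = (\<theta> * fact (k - 1)) ^ 2 * pochhammer \<theta> (card S - 2 * k)"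
      using ncyc_fact[OF fA(1) Ane(1)] ncyc_fact[OF fA(2) Ane(2)] p cd
      by (simp add: power2_eq_square)
    finally show "(\<Sum>\<sigma>\<in>{\<sigma>. \<sigma> \<in> PS \<and> R \<sigma> p}. \<theta> ^ card (cyc S \<sigma>))
        \<le> (\<theta> * fact (k - 1)) ^ 2 * pochhammer \<theta> (card S - 2 * k)" .
  qed
  also have "\<dots> = real ((card S choose k) * ((card S - k) choose k)) * ((\<theta> * fact (k - 1)) ^ 2 * pochhammer \<theta> (card S - 2 * k))"
    using card_Pk[OF fS, of k] by simp
  finally show ?thesis by (simp add: PS_def)
qed

definition qq :: "real \<Rightarrow> nat \<Rightarrow> real" where
  "qq \<theta> m = pochhammer \<theta> m / fact m"

lemma qq_pos: "\<theta> > 0 \<Longrightarrow> qq \<theta> m > 0"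
  by (simp add: qq_def pochhammer_pos)

lemma qq_Suc: "qq \<theta> (Suc m) = qq \<theta> m * (\<theta> + m) / (Suc m)"
  by (simp add: qq_def pochhammer_Suc field_simps)

lemma qq_mono:
  assumes th: "\<theta> > 0" and mn: "m \<le> n"
  shows "m * qq \<theta> m \<le> n * qq \<theta> n"
  using mn
proof (induction n rule: dec_induct)
  case base then show ?case by simp
next
  case (step j)
  have "j * qq \<theta> j \<le> (\<theta> + j) * qq \<theta> j" using qq_pos[OF th, of j] th by (simp add: mult_right_mono)
  also have "\<dots> = Suc j * qq \<theta> (Suc j)" by (simp add: qq_Suc field_simps)
  finally show ?case using step by simp
qed

lemma aux_frac:
  fixes P F M \<theta> :: real
  assumes "F > 0" "M \<ge> 0"
  shows "P / F + \<theta> * P / ((M + 1) * F) = P * (\<theta> + 1 + M) / ((M + 1) * F)"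
proof -
  have d: "(M + 1) * F > 0" using assms by simp
  then have d2: "F + F * M \<noteq> 0" "F * M + F \<noteq> 0" "M * F + F \<noteq> 0" "F + M * F \<noteq> 0" by (simp_all add: algebra_simps)
  have "M + 1 \<noteq> 0" using assms by simp
  then have "P / F = P * (M + 1) / ((M + 1) * F)" by simp
  then have "P / F + \<theta> * P / ((M + 1) * F) = (P * (M + 1) + \<theta> * P) / ((M + 1) * F)"
    by (simp add: add_divide_distrib)
  also have "\<dots> = P * (\<theta> + 1 + M) / ((M + 1) * F)" by (simp add: algebra_simps)
  finally show ?thesis .
qed

lemma qq_sum:
  "(\<Sum>r\<le>m. qq \<theta> r) = pochhammer (\<theta> + 1) m / fact m"
proof (induction m)
  case 0 then show ?case by (simp add: qq_def)
next
  case (Suc m)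
  have "(\<Sum>r\<le>Suc m. qq \<theta> r) = pochhammer (\<theta> + 1) m / fact m + qq \<theta> (Suc m)"
    using Suc by simp
  also have "qq \<theta> (Suc m) = \<theta> * pochhammer (\<theta> + 1) m / fact (Suc m)"
    by (simp add: qq_def pochhammer_rec)
  also have "pochhammer (\<theta> + 1) m / fact m + \<theta> * pochhammer (\<theta> + 1) m / fact (Suc m)
      = pochhammer (\<theta> + 1) (Suc m) / fact (Suc m)"
  proof -
    have f: "(fact m :: real) > 0" by simp
    have "fact (Suc m) = (real m + 1) * (fact m :: real)" by (simp add: fact_Suc)
    then show ?thesis using aux_frac[OF f, of "real m" "pochhammer (\<theta> + 1) m" \<theta>]
      by (simp add: pochhammer_Suc mult.commute add_ac)
  qed
  finally show ?case .
qed

lemma qq_sum_ratio: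
  assumes th: "\<theta> > 0"
  shows "(\<Sum>r\<le>n. qq \<theta> r) = qq \<theta> n * (\<theta> + n) / \<theta>"
proof -
  have "pochhammer \<theta> (Suc n) = \<theta> * pochhammer (\<theta> + 1) n" by (rule pochhammer_rec)
  moreover have "pochhammer \<theta> (Suc n) = pochhammer \<theta> n * (\<theta> + n)" by (rule pochhammer_Suc)
  ultimately have "pochhammer (\<theta> + 1) n = pochhammer \<theta> n * (\<theta> + n) / \<theta>" using th
    by (simp add: field_simps)
  then show ?thesis using qq_sum[of \<theta> n] by (simp add: qq_def)
qed

lemma inv_sq_tail:
  assumes "m \<ge> 1" "m \<le> N"
  shows "(\<Sum>k\<in>{m<..N}. 1 / (real k)^2) \<le> 1 / m - 1 / N"
  using assms(2)
proof (induction N rule: dec_induct)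
  case base then show ?case by simp
next
  case (step j)
  have j1: "real j \<ge> 1" using step assms by simp
  have "(\<Sum>k\<in>{m<..Suc j}. 1 / (real k)^2) = (\<Sum>k\<in>{m<..j}. 1 / (real k)^2) + 1 / (real (Suc j))^2"
  proof -
    have "{m<..Suc j} = insert (Suc j) {m<..j}" using step by auto
    then show ?thesis by simp
  qed
  also have "\<dots> \<le> 1 / m - 1 / j + 1 / (real (Suc j))^2" using step by simp
  also have "1 / (real (Suc j))^2 \<le> 1 / j - 1 / Suc j"
  proof -
    have "real j * real (Suc j) \<le> (real (Suc j))^2" by (simp add: power2_eq_square)
    then have "1 / (real (Suc j))^2 \<le> 1 / (real j * real (Suc j))"
      using j1 by (intro divide_left_mono) auto
    also have "1 / (real j * real (Suc j)) = 1 / j - 1 / Suc j" using j1 by (simp add: field_simps)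
    finally show ?thesis .
  qed
  finally show ?case by simp
qed

lemma inv_sq_sum:
  "(\<Sum>k\<in>{1..N}. 1 / (real k)^2) \<le> 2"
proof (cases "N \<ge> 1")
  case True
  have "{1..N} = insert 1 {1<..N}" using True by auto
  then have "(\<Sum>k\<in>{1..N}. 1 / (real k)^2) = 1 + (\<Sum>k\<in>{1<..N}. 1 / (real k)^2)" by simp
  also have "\<dots> \<le> 1 + (1 / 1 - 1 / N)" using inv_sq_tail[of 1 N] True by simp
  also have "\<dots> \<le> 2" by simp
  finally show ?thesis .
qed simp

lemma inv_sq_tail_xi:
  assumes xi: "\<xi> \<ge> 2"
  shows "(\<Sum>k\<in>{k\<in>{1..n}. \<xi> < real k}. 1 / (real k)^2) \<le> 2 / \<xi>"
proof -
  define m where "m = nat \<lfloor>\<xi>\<rfloor>"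
  have m1: "m \<ge> 1" using xi by (simp add: m_def le_nat_iff)
  have mx: "real m > \<xi> - 1" using xi by (simp add: m_def)
  have sub: "{k\<in>{1..n}. \<xi> < real k} \<subseteq> {m<..max m n}"
  proof
    fix k assume "k \<in> {k\<in>{1..n}. \<xi> < real k}"
    then have "k \<le> n" "\<xi> < real k" by auto
    moreover have "real m \<le> \<xi>" using xi by (simp add: m_def)
    ultimately show "k \<in> {m<..max m n}" by auto
  qed
  have "(\<Sum>k\<in>{k\<in>{1..n}. \<xi> < real k}. 1 / (real k)^2) \<le> (\<Sum>k\<in>{m<..max m n}. 1 / (real k)^2)"
    by (rule sum_mono2[OF _ sub]) auto
  also have "\<dots> \<le> 1 / m - 1 / max m n" using inv_sq_tail[OF m1, of "max m n"] by simp
  also have "\<dots> \<le> 1 / m" by simp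
  also have "\<dots> \<le> 2 / \<xi>" using mx xi m1 by (simp add: field_simps)
  finally show ?thesis .
qed

definition rr :: "real \<Rightarrow> nat \<Rightarrow> nat \<Rightarrow> real" where
  "rr \<theta> n k = real ((n choose k) * ((n - k) choose k)) * ((\<theta> * fact (k - 1))^2 * pochhammer \<theta> (n - 2 * k)) / pochhammer \<theta> n"

lemma rr_nonneg: "\<theta> > 0 \<Longrightarrow> rr \<theta> n k \<ge> 0"
  by (simp add: rr_def pochhammer_pos less_imp_le)

lemma rr_zero: "n < 2 * k \<Longrightarrow> rr \<theta> n k = 0"
proof -
  assume "n < 2 * k"
  then have "n < k \<or> n - k < k" by arith
  then show ?thesis by (auto simp: rr_def)
qed

lemma rr_eq:
  assumes th: "\<theta> > 0" and k: "1 \<le> k" and kn: "2 * k \<le> n"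
  shows "rr \<theta> n k = \<theta>^2 / (real k)^2 * (qq \<theta> (n - 2 * k) / qq \<theta> n)"
proof -
  have b1: "real (n choose k) = fact n / (fact k * fact (n - k))" using kn by (simp add: binomial_fact)
  have b2: "real ((n - k) choose k) = fact (n - k) / (fact k * fact (n - 2 * k))"
  proof -
    have "k \<le> n - k" using kn by simp
    from binomial_fact[OF this] show ?thesis by (simp add: mult_2)
  qed
  have fk: "(fact k :: real) = real k * fact (k - 1)" using k by (simp add: fact_reduce)
  have p1: "pochhammer \<theta> n > 0" "pochhammer \<theta> (n - 2 * k) > 0" using th by (simp_all add: pochhammer_pos)
  have f1: "(fact (k - 1) :: real) > 0" "(fact (n - k) :: real) > 0" "(fact (n - 2 * k) :: real) > 0" "(fact n :: real) > 0" by simp_all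
  have kk: "real k > 0" using k by simp
  show ?thesis
    unfolding rr_def qq_def of_nat_mult b1 b2 fk
    using p1 f1 kk by (simp add: field_simps power2_eq_square)
qed

lemma rr_small:
  assumes th: "\<theta> > 0" and k: "1 \<le> k" and kn: "4 * k \<le> n"
  shows "rr \<theta> n k \<le> 2 * \<theta>^2 / (real k)^2"
proof -
  have m1: "n - 2 * k \<ge> 1" "2 * (n - 2 * k) \<ge> n" using k kn by auto
  have q: "qq \<theta> (n - 2 * k) > 0" "qq \<theta> n > 0" using qq_pos[OF th] by auto
  have "real (n - 2 * k) * qq \<theta> (n - 2 * k) \<le> real n * qq \<theta> n" by (rule qq_mono[OF th]) simp
  moreover have "real n \<le> 2 * real (n - 2 * k)" using m1 by linarith
  then have "real n * qq \<theta> n \<le> (2 * real (n - 2 * k)) * qq \<theta> n"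
    using q by (intro mult_right_mono) auto
  ultimately have "real (n - 2 * k) * qq \<theta> (n - 2 * k) \<le> real (n - 2 * k) * (2 * qq \<theta> n)"
    by (simp add: mult.assoc)
  moreover have "(0::real) < real (n - 2 * k)" using m1 by linarith
  ultimately have "qq \<theta> (n - 2 * k) \<le> 2 * qq \<theta> n" by (rule mult_left_le_imp_le)
  then have r: "qq \<theta> (n - 2 * k) / qq \<theta> n \<le> 2" using q by (simp add: divide_simps)
  have "rr \<theta> n k = \<theta>^2 / (real k)^2 * (qq \<theta> (n - 2 * k) / qq \<theta> n)" using rr_eq[OF th k] kn by simp
  also have "\<dots> \<le> \<theta>^2 / (real k)^2 * 2" by (rule mult_left_mono[OF r]) simp
  also have "\<dots> = 2 * \<theta>^2 / (real k)^2" by simp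
  finally show ?thesis .
qed

lemma rr_big_sum:
  assumes th: "\<theta> > 0" and n: "n \<ge> 1"
  shows "(\<Sum>k\<in>{k\<in>{1..n}. n < 4 * k}. rr \<theta> n k) \<le> 16 * \<theta> * (\<theta> + n) / (real n)^2"
proof -
  define K where "K = {k\<in>{1..n}. n < 4 * k \<and> 2 * k \<le> n}"
  have q: "\<And>r. qq \<theta> r > 0" using qq_pos[OF th] by auto
  have "(\<Sum>k\<in>{k\<in>{1..n}. n < 4 * k}. rr \<theta> n k) = (\<Sum>k\<in>K. rr \<theta> n k)"
  proof (rule sum.mono_neutral_right)
    show "\<forall>i\<in>{k \<in> {1..n}. n < 4 * k} - K. rr \<theta> n i = 0"
      by (auto simp: K_def not_le intro!: rr_zero)
  qed (auto simp: K_def)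
  also have "\<dots> \<le> (\<Sum>k\<in>K. 16 * \<theta>^2 / (real n)^2 * (qq \<theta> (n - 2 * k) / qq \<theta> n))"
  proof (rule sum_mono)
    fix k assume kK: "k \<in> K"
    then have k: "1 \<le> k" "2 * k \<le> n" "n < 4 * k" by (auto simp: K_def)
    have "(real n)^2 \<le> (4 * real k)^2" using k by (intro power_mono) auto
    then have "1 / (real k)^2 \<le> 16 / (real n)^2" using k n by (simp add: field_simps)
    then have "\<theta>^2 * (1 / (real k)^2) \<le> \<theta>^2 * (16 / (real n)^2)"
      by (rule mult_left_mono) simp
    moreover have e1: "\<theta>^2 / (real k)^2 = \<theta>^2 * (1 / (real k)^2)" by simp
    moreover have e2: "16 * \<theta>^2 / (real n)^2 = \<theta>^2 * (16 / (real n)^2)" by simp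
    ultimately have le: "\<theta>^2 / (real k)^2 \<le> 16 * \<theta>^2 / (real n)^2" by linarith
    have "rr \<theta> n k = \<theta>^2 / (real k)^2 * (qq \<theta> (n - 2 * k) / qq \<theta> n)" by (rule rr_eq[OF th k(1,2)])
    also have "\<dots> \<le> 16 * \<theta>^2 / (real n)^2 * (qq \<theta> (n - 2 * k) / qq \<theta> n)"
      by (rule mult_right_mono[OF le]) (use q in \<open>simp add: less_imp_le\<close>)
    finally show "rr \<theta> n k \<le> 16 * \<theta>^2 / (real n)^2 * (qq \<theta> (n - 2 * k) / qq \<theta> n)" .
  qed
  also have "\<dots> = 16 * \<theta>^2 / (real n)^2 / qq \<theta> n * (\<Sum>k\<in>K. qq \<theta> (n - 2 * k))"
    by (simp add: sum_distrib_left)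
  also have "(\<Sum>k\<in>K. qq \<theta> (n - 2 * k)) \<le> (\<Sum>r\<le>n. qq \<theta> r)"
  proof -
    have inj: "inj_on (\<lambda>k. n - 2 * k) K" by (rule inj_onI) (auto simp: K_def)
    have "(\<Sum>k\<in>K. qq \<theta> (n - 2 * k)) = (\<Sum>r\<in>(\<lambda>k. n - 2 * k) ` K. qq \<theta> r)"
      by (simp add: sum.reindex[OF inj])
    also have "\<dots> \<le> (\<Sum>r\<le>n. qq \<theta> r)"
      by (rule sum_mono2) (auto simp: less_imp_le[OF q])
    finally show ?thesis .
  qed
  then have "16 * \<theta>^2 / (real n)^2 / qq \<theta> n * (\<Sum>k\<in>K. qq \<theta> (n - 2 * k))
      \<le> 16 * \<theta>^2 / (real n)^2 / qq \<theta> n * (\<Sum>r\<le>n. qq \<theta> r)"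
    using q by (intro mult_left_mono) (auto simp: less_imp_le)
  also have "\<dots> = 16 * \<theta> * (\<theta> + n) / (real n)^2"
  proof -
    have np: "real n > 0" using n by simp
    show ?thesis unfolding qq_sum_ratio[OF th, of n] using q[of n] th np
      by (simp add: field_simps power2_eq_square)
  qed
  finally show ?thesis .
qed

lemma inv_sq_subset:
  assumes "A \<subseteq> {1..n}" shows "(\<Sum>k\<in>A. 1 / (real k)^2) \<le> 2"
proof -
  have "(\<Sum>k\<in>A. 1 / (real k)^2) \<le> (\<Sum>k\<in>{1..n}. 1 / (real k)^2)"
    by (rule sum_mono2[OF _ assms]) auto
  also have "\<dots> \<le> 2" by (rule inv_sq_sum)
  finally show ?thesis .
qed

lemma rr_small_sum:
  assumes th: "\<theta> > 0" and A: "A \<subseteq> {k\<in>{1..n}. 4 * k \<le> n}"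
  shows "(\<Sum>k\<in>A. rr \<theta> n k) \<le> 2 * \<theta>^2 * (\<Sum>k\<in>A. 1 / (real k)^2)"
proof -
  have "(\<Sum>k\<in>A. rr \<theta> n k) \<le> (\<Sum>k\<in>A. 2 * \<theta>^2 / (real k)^2)"
    using A by (intro sum_mono rr_small[OF th]) auto
  also have "\<dots> = 2 * \<theta>^2 * (\<Sum>k\<in>A. 1 / (real k)^2)" by (simp add: sum_distrib_left)
  finally show ?thesis .
qed

lemma rr_total:
  assumes th: "\<theta> > 0" and n: "n \<ge> 1"
  shows "(\<Sum>k\<in>{1..n}. rr \<theta> n k) \<le> 4 * \<theta>^2 + 16 * \<theta> * (\<theta> + 1)"
proof -
  define A1 where "A1 = {k\<in>{1..n}. 4 * k \<le> n}"
  define A2 where "A2 = {k\<in>{1..n}. n < 4 * k}"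
  have u: "{1..n} = A1 \<union> A2" "A1 \<inter> A2 = {}" by (auto simp: A1_def A2_def)
  have "(\<Sum>k\<in>{1..n}. rr \<theta> n k) = (\<Sum>k\<in>A1. rr \<theta> n k) + (\<Sum>k\<in>A2. rr \<theta> n k)"
    unfolding u(1) by (rule sum.union_disjoint) (auto simp: A1_def A2_def)
  also have "(\<Sum>k\<in>A1. rr \<theta> n k) \<le> 4 * \<theta>^2"
  proof -
    have "(\<Sum>k\<in>A1. rr \<theta> n k) \<le> 2 * \<theta>^2 * (\<Sum>k\<in>A1. 1 / (real k)^2)"
      by (rule rr_small_sum[OF th]) (simp add: A1_def)
    also have "\<dots> \<le> 2 * \<theta>^2 * 2" by (rule mult_left_mono[OF inv_sq_subset[of _ n]]) (auto simp: A1_def)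
    finally show ?thesis by simp
  qed
  also have "(\<Sum>k\<in>A2. rr \<theta> n k) \<le> 16 * \<theta> * (\<theta> + n) / (real n)^2"
    unfolding A2_def by (rule rr_big_sum[OF th n])
  also have "16 * \<theta> * (\<theta> + n) / (real n)^2 \<le> 16 * \<theta> * (\<theta> + 1)"
  proof -
    have np: "real n \<ge> 1" using n by simp
    have "(\<theta> + n) / (real n)^2 = \<theta> / (real n)^2 + 1 / real n" using np by (simp add: field_simps power2_eq_square)
    also have "\<theta> / (real n)^2 \<le> \<theta>" using np th by (simp add: field_simps power2_eq_square) (smt (verit) mult_left_mono mult_le_cancel_left1 np)
    also have "1 / real n \<le> 1" using np by simp
    finally have "(\<theta> + n) / (real n)^2 \<le> \<theta> + 1" by simp
    then have "16 * \<theta> * ((\<theta> + n) / (real n)^2) \<le> 16 * \<theta> * (\<theta> + 1)" using th by (intro mult_left_mono) auto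
    then show ?thesis by simp
  qed
  finally show ?thesis by simp
qed

lemma rr_tail:
  assumes th: "\<theta> > 0" and xi: "\<xi> \<ge> 2"
  shows "(\<Sum>k\<in>{k\<in>{1..n}. \<xi> < real k}. rr \<theta> n k) \<le> (4 * \<theta>^2 + 8 * \<theta> * (\<theta> + 1)) / \<xi>"
proof -
  define B1 where "B1 = {k\<in>{1..n}. \<xi> < real k \<and> 4 * k \<le> n}"
  define B2 where "B2 = {k\<in>{1..n}. \<xi> < real k \<and> n < 4 * k}"
  have u: "{k\<in>{1..n}. \<xi> < real k} = B1 \<union> B2" by (auto simp: B1_def B2_def)
  have "(\<Sum>k\<in>{k\<in>{1..n}. \<xi> < real k}. rr \<theta> n k) = (\<Sum>k\<in>B1. rr \<theta> n k) + (\<Sum>k\<in>B2. rr \<theta> n k)"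
    unfolding u by (rule sum.union_disjoint) (auto simp: B1_def B2_def)
  also have "(\<Sum>k\<in>B1. rr \<theta> n k) \<le> 4 * \<theta>^2 / \<xi>"
  proof -
    have "(\<Sum>k\<in>B1. rr \<theta> n k) \<le> 2 * \<theta>^2 * (\<Sum>k\<in>B1. 1 / (real k)^2)"
      by (rule rr_small_sum[OF th]) (auto simp: B1_def)
    also have "(\<Sum>k\<in>B1. 1 / (real k)^2) \<le> (\<Sum>k\<in>{k\<in>{1..n}. \<xi> < real k}. 1 / (real k)^2)"
      by (rule sum_mono2) (auto simp: B1_def)
    also have "\<dots> \<le> 2 / \<xi>" by (rule inv_sq_tail_xi[OF xi])
    finally show ?thesis by (simp add: mult_left_mono)
  qed
  also have "(\<Sum>k\<in>B2. rr \<theta> n k) \<le> 8 * \<theta> * (\<theta> + 1) / \<xi>"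
  proof (cases "real n \<le> 2 * \<xi>")
    case True
    have "(\<Sum>k\<in>B2. rr \<theta> n k) = 0"
    proof (rule sum.neutral, rule ballI)
      fix k assume "k \<in> B2"
      then have "n < 2 * k" using True by (auto simp: B2_def)
      then show "rr \<theta> n k = 0" by (rule rr_zero)
    qed
    then show ?thesis using th xi by simp
  next
    case False
    then have n: "n \<ge> 1" "real n > 2 * \<xi>" using xi by auto
    have "(\<Sum>k\<in>B2. rr \<theta> n k) \<le> (\<Sum>k\<in>{k\<in>{1..n}. n < 4 * k}. rr \<theta> n k)"
      by (rule sum_mono2) (auto simp: B2_def rr_nonneg[OF th])
    also have "\<dots> \<le> 16 * \<theta> * (\<theta> + n) / (real n)^2" by (rule rr_big_sum[OF th n(1)])
    also have "\<dots> \<le> 8 * \<theta> * (\<theta> + 1) / \<xi>"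
    proof -
      have np: "real n \<ge> 1" using n by simp
      have "(\<theta> + n) / (real n)^2 = (\<theta> / real n + 1) / real n" using np by (simp add: field_simps power2_eq_square)
      also have "\<dots> \<le> (\<theta> + 1) / real n"
        using np th by (intro divide_right_mono) (auto simp: field_simps)
      also have "\<dots> \<le> (\<theta> + 1) / (2 * \<xi>)"
        using n xi th by (intro divide_left_mono) auto
      finally have "(\<theta> + n) / (real n)^2 \<le> (\<theta> + 1) / (2 * \<xi>)" .
      then have "16 * \<theta> * ((\<theta> + n) / (real n)^2) \<le> 16 * \<theta> * ((\<theta> + 1) / (2 * \<xi>))"
        using th by (intro mult_left_mono) auto
      then show ?thesis by simp
    qed
    finally show ?thesis .
  qed
  finally show ?thesis by (simp add: add_divide_distrib)
qed

lemma bad_weight: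
  fixes \<xi> :: real
  assumes xi: "\<xi> \<ge> 2" and \<sigma>: "\<sigma> permutes {1..n}" and bad: "\<sigma> \<notin> P_xi n \<xi>"
  shows "1 \<le> (\<Sum>k\<in>{1..n}. (if \<xi> < real k then 1 else 2 / \<xi>^2) *
            real (card {C \<in> cyc {1..n} \<sigma>. card C = k} * (card {C \<in> cyc {1..n} \<sigma>. card C = k} - 1)))"
proof -
  define c where "c k = card {C \<in> cyc {1..n} \<sigma>. card C = k}" for k
  have cc: "cyc_count n \<sigma> k = c k" for k by (simp add: cyc_count_def cycles_of_def cyc_def c_def)
  from bad \<sigma> obtain k where k: "(real k \<le> \<xi> \<and> real (c k) > \<xi>) \<or> (real k > \<xi> \<and> c k > 1)"
    unfolding P_xi_def by (auto simp: not_le cc)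
  then have c2: "c k \<ge> 2" using xi by (auto simp: not_le)
  have "{C \<in> cyc {1..n} \<sigma>. card C = k} \<noteq> {}"
  proof
    assume "{C \<in> cyc {1..n} \<sigma>. card C = k} = {}"
    then have "c k = 0" unfolding c_def by (simp only: card.empty)
    then show False using c2 by simp
  qed
  then obtain C where C: "C \<in> cyc {1..n} \<sigma>" "card C = k" by auto
  have Csub: "C \<subseteq> {1..n}" using cyc_sub[OF \<sigma> C(1)] .
  obtain x0 where "C = orbit \<sigma> x0" using C(1) unfolding cyc_def by blast
  then have "C \<noteq> {}" using orbit_nonempty[of \<sigma> x0] by simp
  then have k1: "k \<ge> 1" using C Csub finite_subset[OF Csub] by (auto simp: card_gt_0_iff Suc_le_eq)
  have kn: "k \<le> n" using card_mono[OF _ Csub] C by simp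
  define t where "t j = (if \<xi> < real j then 1 else 2 / \<xi>^2) * real (c j * (c j - 1))" for j
  have tnn: "\<And>j. t j \<ge> 0" by (simp add: t_def)
  have ck0: "real (c k - Suc 0) = real (c k) - 1" using c2 by (simp add: of_nat_diff)
  have ck: "real (c k * (c k - 1)) = real (c k) * (real (c k) - 1)" using ck0 by simp
  have "1 \<le> t k"
  proof (cases "\<xi> < real k")
    case True
    have "real (c k) * (real (c k) - 1) \<ge> 2 * 1" using c2 by (intro mult_mono) auto
    then show ?thesis using True ck0 by (simp add: t_def)
  next
    case False
    then have ck1: "real (c k) > \<xi>" using k by auto
    have "\<xi> * (\<xi> / 2) \<le> real (c k) * (real (c k) - 1)"
      using ck1 xi by (intro mult_mono) auto
    then have "\<xi>^2 / 2 \<le> real (c k) * (real (c k) - 1)" by (simp add: power2_eq_square)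
    then have "1 \<le> 2 / \<xi>^2 * (real (c k) * (real (c k) - 1))" using xi by (simp add: field_simps)
    then show ?thesis using False ck0 by (simp add: t_def)
  qed
  also have "t k \<le> (\<Sum>j\<in>{1..n}. t j)" by (rule member_le_sum) (use k1 kn tnn in auto)
  finally show ?thesis by (simp add: t_def c_def)
qed

lemma main_bound:
  fixes \<xi> :: real and \<theta> :: real
  assumes th: "\<theta> > 0" and xi: "\<xi> \<ge> 2"
  shows "ewens_prob \<theta> n {\<sigma>. \<sigma> permutes {1..n} \<and> \<sigma> \<notin> P_xi n \<xi>}
     \<le> (4 * \<theta>^2 + 8 * \<theta> * (\<theta> + 1)) / \<xi> + 2 / \<xi>^2 * (4 * \<theta>^2 + 16 * \<theta> * (\<theta> + 1))"
proof -
  define S where "S = {1..n::nat}"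
  define PS where "PS = {\<sigma>. \<sigma> permutes S}"
  define W where "W \<sigma> = \<theta> ^ card (cyc S \<sigma>)" for \<sigma>
  define c where "c \<sigma> k = card {C \<in> cyc S \<sigma>. card C = k}" for \<sigma> k
  define wt where "wt k = (if \<xi> < real k then 1 else 2 / \<xi>^2)" for k :: nat
  define B where "B = {\<sigma>. \<sigma> permutes S \<and> \<sigma> \<notin> P_xi n \<xi>}"
  have fS: "finite S" and cS: "card S = n" by (simp_all add: S_def)
  have fPS: "finite PS" using finite_permutations[OF fS] by (simp add: PS_def)
  have Wnn: "\<And>\<sigma>. W \<sigma> \<ge> 0" using th by (simp add: W_def)
  have wtnn: "\<And>k. wt k \<ge> 0" by (simp add: wt_def)
  have pos: "pochhammer \<theta> n > 0" using th by (simp add: pochhammer_pos)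
  have num: "(\<Sum>\<sigma>\<in>{\<sigma>. \<sigma> permutes {1..n}} \<inter> B. \<theta> ^ num_cycles n \<sigma>) = (\<Sum>\<sigma>\<in>PS \<inter> B. W \<sigma>)"
    by (simp add: PS_def S_def W_def num_cycles_def cycles_of_def cyc_def)
  have "(\<Sum>\<sigma>\<in>PS \<inter> B. W \<sigma>) \<le> (\<Sum>\<sigma>\<in>PS. W \<sigma> * (\<Sum>k\<in>{1..n}. wt k * real (c \<sigma> k * (c \<sigma> k - 1))))"
  proof -
    have "(\<Sum>\<sigma>\<in>PS \<inter> B. W \<sigma>) \<le> (\<Sum>\<sigma>\<in>PS \<inter> B. W \<sigma> * (\<Sum>k\<in>{1..n}. wt k * real (c \<sigma> k * (c \<sigma> k - 1))))"
    proof (rule sum_mono)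
      fix \<sigma> assume "\<sigma> \<in> PS \<inter> B"
      then have "1 \<le> (\<Sum>k\<in>{1..n}. wt k * real (c \<sigma> k * (c \<sigma> k - 1)))"
        using bad_weight[OF xi, of \<sigma> n] by (auto simp: PS_def B_def S_def c_def wt_def)
      then show "W \<sigma> \<le> W \<sigma> * (\<Sum>k\<in>{1..n}. wt k * real (c \<sigma> k * (c \<sigma> k - 1)))"
        using Wnn[of \<sigma>] by (simp add: mult_le_cancel_left1)
    qed
    also have "\<dots> \<le> (\<Sum>\<sigma>\<in>PS. W \<sigma> * (\<Sum>k\<in>{1..n}. wt k * real (c \<sigma> k * (c \<sigma> k - 1))))"
      by (rule sum_mono2[OF fPS]) (auto intro!: mult_nonneg_nonneg sum_nonneg Wnn wtnn)
    finally show ?thesis .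
  qed
  also have "\<dots> = (\<Sum>k\<in>{1..n}. wt k * (\<Sum>\<sigma>\<in>PS. W \<sigma> * real (c \<sigma> k * (c \<sigma> k - 1))))"
    by (simp add: sum_distrib_left sum_distrib_right sum.swap[of _ PS] mult_ac)
  also have "\<dots> \<le> (\<Sum>k\<in>{1..n}. wt k * (rr \<theta> n k * pochhammer \<theta> n))"
  proof (rule sum_mono, rule mult_left_mono[OF _ wtnn])
    fix k assume "k \<in> {1..n}"
    then have k1: "k \<ge> 1" by simp
    have "(\<Sum>\<sigma>\<in>PS. W \<sigma> * real (c \<sigma> k * (c \<sigma> k - 1)))
       \<le> real ((card S choose k) * ((card S - k) choose k)) * ((\<theta> * fact (k - 1)) ^ 2 * pochhammer \<theta> (card S - 2 * k))"
      unfolding PS_def W_def c_def by (rule moment2[OF fS less_imp_le[OF th] k1])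
    also have "\<dots> = rr \<theta> n k * pochhammer \<theta> n" using pos by (simp add: rr_def cS)
    finally show "(\<Sum>\<sigma>\<in>PS. W \<sigma> * real (c \<sigma> k * (c \<sigma> k - 1))) \<le> rr \<theta> n k * pochhammer \<theta> n" .
  qed
  also have "\<dots> = (\<Sum>k\<in>{1..n}. wt k * rr \<theta> n k) * pochhammer \<theta> n"
    by (simp add: sum_distrib_right mult.assoc)
  finally have A: "(\<Sum>\<sigma>\<in>PS \<inter> B. W \<sigma>) / pochhammer \<theta> n \<le> (\<Sum>k\<in>{1..n}. wt k * rr \<theta> n k)"
    using pos by (simp add: divide_simps)
  have "(\<Sum>k\<in>{1..n}. wt k * rr \<theta> n k)
      = (\<Sum>k\<in>{k\<in>{1..n}. \<xi> < real k}. rr \<theta> n k) + 2 / \<xi>^2 * (\<Sum>k\<in>{k\<in>{1..n}. \<not> \<xi> < real k}. rr \<theta> n k)"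
  proof -
    have e1: "{k\<in>{1..n}. \<xi> < real k} = {1..n} \<inter> {k. \<xi> < real k}" by auto
    have e2: "{k\<in>{1..n}. \<not> \<xi> < real k} = {1..n} \<inter> - {k. \<xi> < real k}" by auto
    have "(\<Sum>k\<in>{1..n}. wt k * rr \<theta> n k) = (\<Sum>k\<in>{1..n}. if \<xi> < real k then rr \<theta> n k else 2 / \<xi>^2 * rr \<theta> n k)"
      by (intro sum.cong) (auto simp: wt_def)
    also have "\<dots> = (\<Sum>k\<in>{1..n} \<inter> {k. \<xi> < real k}. rr \<theta> n k) + (\<Sum>k\<in>{1..n} \<inter> - {k. \<xi> < real k}. 2 / \<xi>^2 * rr \<theta> n k)"
      by (rule sum.If_cases) simp
    finally show ?thesis unfolding e1 e2 by (simp add: sum_distrib_left)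
  qed
  also have "(\<Sum>k\<in>{k\<in>{1..n}. \<not> \<xi> < real k}. rr \<theta> n k) \<le> 4 * \<theta>^2 + 16 * \<theta> * (\<theta> + 1)"
  proof (cases "n \<ge> 1")
    case True
    have "(\<Sum>k\<in>{k\<in>{1..n}. \<not> \<xi> < real k}. rr \<theta> n k) \<le> (\<Sum>k\<in>{1..n}. rr \<theta> n k)"
      by (rule sum_mono2) (auto simp: rr_nonneg[OF th])
    also have "\<dots> \<le> 4 * \<theta>^2 + 16 * \<theta> * (\<theta> + 1)" by (rule rr_total[OF th True])
    finally show ?thesis .
  next
    case False
    then show ?thesis using th by simp
  qed
  then have "2 / \<xi>^2 * (\<Sum>k\<in>{k\<in>{1..n}. \<not> \<xi> < real k}. rr \<theta> n k) \<le> 2 / \<xi>^2 * (4 * \<theta>^2 + 16 * \<theta> * (\<theta> + 1))"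
    by (rule mult_left_mono) simp
  also note rr_tail[OF th xi, of n]
  finally have "(\<Sum>k\<in>{1..n}. wt k * rr \<theta> n k) \<le> (4 * \<theta>^2 + 8 * \<theta> * (\<theta> + 1)) / \<xi> + 2 / \<xi>^2 * (4 * \<theta>^2 + 16 * \<theta> * (\<theta> + 1))"
    by simp
  then show ?thesis using A num unfolding ewens_prob_def B_def S_def by simp
qed

theorem lemma4p2:
  fixes \<theta> :: real and \<xi> :: "nat \<Rightarrow> real"
  assumes "\<theta> > 0"
    and "\<And>n. \<xi> n > 0"
    and "filterlim \<xi> at_top sequentially"
  shows "(\<lambda>n. ewens_prob \<theta> n {\<sigma>. \<sigma> permutes {1..n} \<and> \<sigma> \<notin> P_xi n (\<xi> n)})
           \<in> O(\<lambda>n. 1 / \<xi> n)"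
proof -
  have th: "\<theta> > 0" by (rule assms(1))
  define A where "A = 4 * \<theta>^2 + 8 * \<theta> * (\<theta> + 1)"
  define B where "B = 4 * \<theta>^2 + 16 * \<theta> * (\<theta> + 1)"
  have A0: "A \<ge> 0" and B0: "B \<ge> 0" using th by (simp_all add: A_def B_def)
  have ev: "eventually (\<lambda>n. 2 \<le> \<xi> n) sequentially"
    using assms(3) by (simp add: filterlim_at_top)
  show ?thesis
  proof (rule bigoI[where c = "A + B"])
    show "eventually (\<lambda>n. norm (ewens_prob \<theta> n {\<sigma>. \<sigma> permutes {1..n} \<and> \<sigma> \<notin> P_xi n (\<xi> n)})
            \<le> (A + B) * norm (1 / \<xi> n)) sequentially"
      using ev
    proof eventually_elim
      case (elim n)
      define p where "p = ewens_prob \<theta> n {\<sigma>. \<sigma> permutes {1..n} \<and> \<sigma> \<notin> P_xi n (\<xi> n)}"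
      have p0: "p \<ge> 0" unfolding p_def ewens_prob_def using th
        by (intro divide_nonneg_pos sum_nonneg) (auto simp: pochhammer_pos)
      have "p \<le> A / \<xi> n + 2 / (\<xi> n)^2 * B"
        unfolding p_def A_def B_def by (rule main_bound[OF th elim])
      also have "2 / (\<xi> n)^2 * B \<le> B / \<xi> n"
      proof -
        have "2 / (\<xi> n)^2 \<le> 1 / \<xi> n" using elim by (simp add: field_simps power2_eq_square)
        then have "2 / (\<xi> n)^2 * B \<le> 1 / \<xi> n * B" using B0 by (rule mult_right_mono)
        then show ?thesis by simp
      qed
      finally have "p \<le> (A + B) / \<xi> n" by (simp add: add_divide_distrib)
      then show ?case using p0 elim by (simp add: p_def)
    qed
  qed
qed

end
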